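(* Let $R$ be a ring (associative, not necessarily unital). Then the set of nilpotent elements of the polynomial ring $R[x]$ is a subring of $R[x]$ if and only if $\operatorname{Nil}(R)[x]=\operatorname{Nil}(R[x])$.
   Context: $\operatorname{Nil}(S)$ denotes the set of nilpotent elements of a ring $S$; $\operatorname{Nil}(R)[x]$ denotes the set of polynomials in $R[x]$ all of whose coefficients lie in $\operatorname{Nil}(R)$. *)

theory Defs
  imports "HOL-Computational_Algebra.Polynomial"
begin

text \<open>The library multiplication on polynomials
needs commutativity, so the (noncommutative) Cauchy product is defined here;
the indeterminate x commutes with coefficients.\<close>

definition pmult :: "'a::ring poly \<Rightarrow> 'a poly \<Rightarrow> 'a poly" where
  "pmult p q = (\<Sum>i\<le>degree p. \<Sum>j\<le>degree q. monom (coeff p i * coeff q j) (i + j))"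

text \<open>Positive powers w.r.t. a multiplication (no unit available):
mpow m x n = x^(n+1).\<close>

fun mpow :: "('b \<Rightarrow> 'b \<Rightarrow> 'b) \<Rightarrow> 'b \<Rightarrow> nat \<Rightarrow> 'b" where
  "mpow m x 0 = x"
| "mpow m x (Suc n) = m (mpow m x n) x"

definition Nil_of :: "('b \<Rightarrow> 'b \<Rightarrow> 'b) \<Rightarrow> 'b::zero set" where
  "Nil_of m = {x. \<exists>n. mpow m x n = 0}"

abbreviation NilR :: "'a::ring set" where
  "NilR \<equiv> Nil_of (*)"

abbreviation NilRx :: "'a::ring poly set" where
  "NilRx \<equiv> Nil_of pmult"

definition NilR_poly :: "'a::ring poly set" where
  "NilR_poly = {p. \<forall>i. coeff p i \<in> NilR}"

definition is_subring_poly :: "'a::ring poly set \<Rightarrow> bool" where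
  "is_subring_poly S \<longleftrightarrow> 0 \<in> S \<and> (\<forall>a\<in>S. \<forall>b\<in>S. a - b \<in> S \<and> pmult a b \<in> S)"

end

theory Submission imports Defs "HOL-Computational_Algebra.Formal_Power_Series"
begin
unbundle fps_syntax

definition phi :: "'a::ring poly \<Rightarrow> 'a fps" where "phi p = Abs_fps (coeff p)"

lemma phi_nth[simp]: "phi p $ n = coeff p n" by (simp add: phi_def)

lemma coeff_pmult: "coeff (pmult p q) n = (\<Sum>i=0..n. coeff p i * coeff q (n - i))"
proof -
  have inner: "(\<Sum>j\<le>degree q. if i + j = n then coeff p i * coeff q j else 0)
      = (if i \<le> n then coeff p i * coeff q (n - i) else 0)" for i
  proof (cases "i \<le> n \<and> n - i \<le> degree q")
    case True
    have "(\<Sum>j\<le>degree q. if i + j = n then coeff p i * coeff q j else 0)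
        = (\<Sum>j\<le>degree q. if j = n - i then coeff p i * coeff q j else 0)"
      by (rule sum.cong) (use True in auto)
    also have "\<dots> = coeff p i * coeff q (n - i)" using True by (simp add: sum.delta)
    finally show ?thesis using True by simp
  next
    case False
    have "(\<Sum>j\<le>degree q. if i + j = n then coeff p i * coeff q j else 0) = 0"
      by (rule sum.neutral) (use False in auto)
    then show ?thesis using False by (auto simp: coeff_eq_0)
  qed
  have "coeff (pmult p q) n = (\<Sum>i\<le>degree p. \<Sum>j\<le>degree q. if i + j = n then coeff p i * coeff q j else 0)"
    by (simp add: pmult_def coeff_sum coeff_monom)
  also have "\<dots> = (\<Sum>i\<le>degree p. if i \<le> n then coeff p i * coeff q (n - i) else 0)"
    using inner by simp
  also have "\<dots> = (\<Sum>i\<in>{..degree p} \<inter> {..n}. coeff p i * coeff q (n - i))"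
    by (simp add: sum.inter_restrict atMost_def)
  also have "\<dots> = (\<Sum>i\<in>{0..n}. coeff p i * coeff q (n - i))"
    by (rule sum.mono_neutral_left) (auto, metis coeff_eq_0 mult_zero_left not_le)
  finally show ?thesis .
qed

lemma phi_pmult: "phi (pmult p q) = phi p * phi q"
  by (rule fps_ext) (simp add: fps_mult_nth coeff_pmult)

lemma phi_mpow: "phi (mpow pmult p n) = mpow (*) (phi p) n"
  by (induction n) (auto simp: phi_pmult)

lemma phi_eq0: "phi p = 0 \<longleftrightarrow> p = 0"
  by (auto simp: fps_eq_iff poly_eq_iff)

lemma NilRx_phi: "p \<in> NilRx \<longleftrightarrow> phi p \<in> Nil_of (*)"
  unfolding Nil_of_def by (simp add: phi_mpow[symmetric] phi_eq0)


lemma mpow_zero_mono: "mpow (*) x n = (0::'b::ring) \<Longrightarrow> n \<le> k \<Longrightarrow> mpow (*) x k = 0"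
proof (induction k)
  case 0 then show ?case by simp
next
  case (Suc k) then show ?case by (cases "n = Suc k") auto
qed

lemma mpow_add: "mpow (*) (x::'b::ring) (Suc (i + j)) = mpow (*) x i * mpow (*) x j"
  by (induction j) (auto simp: mult.assoc)

lemma mpow_left: "(x::'b::ring) * mpow (*) x i = mpow (*) x (Suc i)"
  using mpow_add[of x 0 i] by simp

lemma mpow_mpow: "mpow (*) (mpow (*) (x::'b::ring) k) j = mpow (*) x (Suc k * Suc j - 1)"
proof (induction j)
  case 0 then show ?case by simp
next
  case (Suc j)
  have "mpow (*) (mpow (*) x k) (Suc j) = mpow (*) x (Suc k * Suc j - 1) * mpow (*) x k"
    using Suc by simp
  also have "\<dots> = mpow (*) x (Suc (Suc k * Suc j - 1 + k))" by (rule mpow_add[symmetric])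
  also have "Suc (Suc k * Suc j - 1 + k) = Suc k * Suc (Suc j) - 1" by simp
  finally show ?case .
qed

lemma mpow_neg: "mpow (*) (- (y::'b::ring)) n = (if even n then - mpow (*) y n else mpow (*) y n)"
  by (induction n) auto

lemma zero_Nil: "(0::'b::ring) \<in> Nil_of (*)"
  unfolding Nil_of_def by (auto intro!: exI[of _ 0])

lemma pzero_Nil: "(0::'a::ring poly) \<in> NilRx"
  unfolding Nil_of_def by (auto intro!: exI[of _ 0])

lemma neg_Nil: "(y::'b::ring) \<in> Nil_of (*) \<Longrightarrow> - y \<in> Nil_of (*)"
  unfolding Nil_of_def by (auto simp: mpow_neg)


lemma sum_single:
  fixes f :: "nat \<Rightarrow> 'b::comm_monoid_add"
  assumes "d \<in> S" "finite S" "\<And>i. i \<in> S \<Longrightarrow> i \<noteq> d \<Longrightarrow> f i = 0"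
  shows "sum f S = f d"
proof -
  have "sum f S = f d + sum f (S - {d})" using assms by (simp add: sum.remove)
  also have "sum f (S - {d}) = 0" using assms by (intro sum.neutral) auto
  finally show ?thesis by simp
qed

lemma pmult_top:
  assumes A: "\<forall>k>d. coeff A k = 0" and B: "\<forall>k>e. coeff B k = 0"
  shows "coeff (pmult A B) (d+e) = coeff A d * coeff B e"
    and "k > d+e \<Longrightarrow> coeff (pmult A B) k = 0"
proof -
  show "coeff (pmult A B) (d+e) = coeff A d * coeff B e"
    unfolding coeff_pmult
  proof (subst sum_single[of d])
    fix i assume i: "i \<in> {0..d+e}" "i \<noteq> d"
    show "coeff A i * coeff B (d + e - i) = 0"
    proof (cases "i < d")
      case True then have "d + e - i > e" by simp
      then show ?thesis using B by simp
    next
      case False then show ?thesis using A i by simp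
    qed
  qed auto
  show "coeff (pmult A B) k = 0" if "k > d+e"
    unfolding coeff_pmult
  proof (rule sum.neutral, intro ballI)
    fix x assume x: "x \<in> {0..k}"
    show "coeff A x * coeff B (k - x) = 0"
    proof (cases "x \<le> d")
      case True then have "k - x > e" using that by simp
      then show ?thesis using B by simp
    next
      case False then show ?thesis using A by simp
    qed
  qed
qed

lemma mpow_lead: "(\<forall>k > Suc n * degree p. coeff (mpow pmult p n) k = 0) \<and>
   coeff (mpow pmult p n) (Suc n * degree p) = mpow (*) (lead_coeff p) n"
proof (induction n)
  case 0
  then show ?case by (auto simp: coeff_eq_0)
next
  case (Suc n)
  have B: "\<forall>k>degree p. coeff p k = 0" by (auto simp: coeff_eq_0)
  have e: "Suc (Suc n) * degree p = Suc n * degree p + degree p" by simp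
  show ?case
    using pmult_top[OF conjunct1[OF Suc] B] Suc unfolding e by auto
qed

lemma monom_mult: "pmult (monom a i) (monom b j) = monom (a*b) (i+j)"
proof -
  have A: "\<forall>k>i. coeff (monom a i) k = 0" and B: "\<forall>k>j. coeff (monom b j) k = 0"
    by (auto simp: coeff_monom)
  show ?thesis
  proof (rule poly_eqI)
    fix k
    show "coeff (pmult (monom a i) (monom b j)) k = coeff (monom (a * b) (i + j)) k"
    proof (cases "k < i + j")
      case True
      then show ?thesis unfolding coeff_pmult
        by (auto simp: coeff_monom intro!: sum.neutral)
    next
      case False
      then show ?thesis using pmult_top[OF A B] by (cases "k = i+j") auto
    qed
  qed
qed

lemma mpow_monom: "mpow pmult (monom c i) n = monom (mpow (*) c n) (Suc n * i)"
  by (induction n) (auto simp: monom_mult add.commute)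

lemma monom_Nil: "c \<in> NilR \<Longrightarrow> monom c i \<in> NilRx"
  unfolding Nil_of_def by (auto simp: mpow_monom)

lemma sub_add:
  assumes S: "is_subring_poly (NilRx :: 'a::ring poly set)" and "p \<in> NilRx" "q \<in> NilRx"
  shows "p + q \<in> (NilRx :: 'a::ring poly set)"
proof -
  have z: "0 \<in> (NilRx :: 'a::ring poly set)" and d: "\<And>a b. a \<in> (NilRx :: 'a::ring poly set) \<Longrightarrow> b \<in> NilRx \<Longrightarrow> a - b \<in> NilRx"
    using S unfolding is_subring_poly_def by auto
  have "0 - q \<in> NilRx" using d[OF z assms(3)] .
  then have "p - (0 - q) \<in> NilRx" using d assms(2) by blast
  then show ?thesis by simp
qed

lemma sub_sum:
  assumes S: "is_subring_poly (NilRx :: 'a::ring poly set)" and "finite I" "\<And>i. i \<in> I \<Longrightarrow> f i \<in> NilRx"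
  shows "sum f I \<in> (NilRx :: 'a::ring poly set)"
  using assms(2,3)
proof (induction I rule: finite_induct)
  case empty then show ?case by (simp add: pzero_Nil)
next
  case (insert x F) then show ?case by (simp add: sub_add[OF S])
qed

lemma fwd:
  assumes S: "is_subring_poly (NilRx :: 'a::ring poly set)"
  shows "NilR_poly = (NilRx :: 'a poly set)"
proof
  show "NilR_poly \<subseteq> (NilRx :: 'a poly set)"
  proof
    fix p :: "'a poly" assume "p \<in> NilR_poly"
    then have c: "coeff p i \<in> NilR" for i by (simp add: NilR_poly_def)
    have "(\<Sum>i\<le>degree p. monom (coeff p i) i) \<in> NilRx"
      by (rule sub_sum[OF S]) (auto intro: monom_Nil c)
    then show "p \<in> NilRx" by (simp add: poly_as_sum_of_monoms)
  qed
next
  have main: "\<forall>p::'a poly. p \<in> NilRx \<longrightarrow> degree p \<le> d \<longrightarrow> (\<forall>i. coeff p i \<in> NilR)" for d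
  proof (induction d)
    case 0
    show ?case
    proof (intro allI impI)
      fix p :: "'a poly" and i assume p: "p \<in> NilRx" "degree p \<le> 0"
      then obtain n where n: "mpow pmult p n = 0" by (auto simp: Nil_of_def)
      have "coeff p 0 \<in> NilR"
        using conjunct2[OF mpow_lead[of n p]] p n by (auto simp: Nil_of_def)
      then show "coeff p i \<in> NilR" using p by (cases i) (auto simp: coeff_eq_0 zero_Nil)
    qed
  next
    case (Suc d)
    show ?case
    proof (intro allI impI)
      fix p :: "'a poly" and i assume p: "p \<in> NilRx" "degree p \<le> Suc d"
      show "coeff p i \<in> NilR"
      proof (cases "degree p \<le> d")
        case True then show ?thesis using Suc p by blast
      next
        case False
        then have dp: "degree p = Suc d" using p by simp
        obtain n where n: "mpow pmult p n = 0" using p by (auto simp: Nil_of_def)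
        have lc: "lead_coeff p \<in> NilR"
          using conjunct2[OF mpow_lead[of n p]] n by (auto simp: Nil_of_def)
        define q where "q = p - monom (lead_coeff p) (Suc d)"
        have qN: "q \<in> NilRx" unfolding q_def using S p monom_Nil[OF lc]
          unfolding is_subring_poly_def by blast
        have "degree q \<le> d"
          by (rule degree_le) (auto simp: q_def coeff_monom dp coeff_eq_0 Suc_le_eq)
        then have qc: "\<forall>i. coeff q i \<in> NilR" using Suc qN by blast
        show ?thesis
        proof (cases "i = Suc d")
          case True then show ?thesis using lc dp by simp
        next
          case False
          then have "coeff p i = coeff q i" by (simp add: q_def coeff_monom)
          then show ?thesis using qc by simp
        qed
      qed
    qed
  qed
  show "(NilRx :: 'a poly set) \<subseteq> NilR_poly"
    using main by (auto simp: NilR_poly_def)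
qed


subsection \<open>evaluation at 1\<close>

definition ev :: "'a::ring poly \<Rightarrow> 'a" where "ev p = (\<Sum>i\<le>degree p. coeff p i)"

lemma ev_bound: "degree p \<le> N \<Longrightarrow> ev p = (\<Sum>i\<le>N. coeff p i)"
  unfolding ev_def by (rule sum.mono_neutral_left) (auto simp: coeff_eq_0)

lemma ev_add: "ev (p + q) = ev p + ev q"
proof -
  let ?N = "max (degree p) (degree q)"
  have "degree (p + q) \<le> ?N" by (rule degree_add_le) auto
  then show ?thesis
    by (simp add: ev_bound[of _ ?N] sum.distrib)
qed

lemma ev_0: "ev 0 = 0" by (simp add: ev_def)

lemma ev_sum: "finite I \<Longrightarrow> ev (sum f I) = (\<Sum>i\<in>I. ev (f i))"
  by (induction I rule: finite_induct) (auto simp: ev_0 ev_add)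

lemma ev_monom: "ev (monom c k) = c"
  by (simp add: ev_bound[of _ k] degree_monom_le coeff_monom)

lemma ev_pmult: "ev (pmult p q) = ev p * ev q"
proof -
  have "ev (pmult p q) = (\<Sum>i\<le>degree p. \<Sum>j\<le>degree q. coeff p i * coeff q j)"
    unfolding pmult_def by (simp add: ev_sum ev_monom)
  then show ?thesis by (simp add: ev_def sum_product)
qed

lemma ev_mpow: "ev (mpow pmult p n) = mpow (*) (ev p) n"
  by (induction n) (auto simp: ev_pmult)

lemma NilD:
  assumes H: "NilR_poly \<subseteq> (NilRx :: 'a::ring poly set)"
    and x: "(x::'a) \<in> NilR" and y: "y \<in> NilR"
  shows "x - y \<in> NilR"
proof -
  let ?p = "[:x, - y:]"
  have "?p \<in> NilR_poly"
    unfolding NilR_poly_def using x neg_Nil[OF y] zero_Nil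
    by (auto simp: coeff_pCons split: nat.splits)
  then have "?p \<in> NilRx" using H by blast
  then obtain n where "mpow pmult ?p n = 0" by (auto simp: Nil_of_def)
  then have "mpow (*) (ev ?p) n = 0" by (metis ev_0 ev_mpow)
  moreover have "ev ?p = x - y" by (simp add: ev_bound[of _ 1])
  ultimately show ?thesis by (auto simp: Nil_of_def)
qed

lemma NilAdd:
  assumes H: "NilR_poly \<subseteq> (NilRx :: 'a::ring poly set)"
    and x: "(x::'a) \<in> NilR" and y: "y \<in> NilR"
  shows "x + y \<in> NilR"
proof -
  have "0 - y \<in> NilR" by (rule NilD[OF H zero_Nil y])
  from NilD[OF H x this] show ?thesis by simp
qed

lemma NilSum:
  assumes H: "NilR_poly \<subseteq> (NilRx :: 'a::ring poly set)"
  shows "finite I \<Longrightarrow> (\<And>i. i \<in> I \<Longrightarrow> (f i::'a) \<in> NilR) \<Longrightarrow> sum f I \<in> NilR"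
  by (induction I rule: finite_induct) (auto simp: zero_Nil NilAdd[OF H])


lemma fps_bnd_mult:
  fixes g h :: "'b::ring fps"
  assumes "\<forall>k>d. g $ k = 0" "\<forall>k>e. h $ k = 0" "k > d + e"
  shows "(g * h) $ k = 0"
  unfolding fps_mult_nth
proof (rule sum.neutral, intro ballI)
  fix x assume x: "x \<in> {0..k}"
  show "g $ x * h $ (k - x) = 0"
  proof (cases "x \<le> d")
    case True then have "k - x > e" using assms by simp
    then show ?thesis using assms by simp
  next
    case False then show ?thesis using assms by simp
  qed
qed

lemma fps_mpow_bnd:
  fixes f :: "'b::ring fps"
  assumes f: "\<forall>k>1. f $ k = 0"
  shows "\<forall>k > Suc i. mpow (*) f i $ k = 0"
proof (induction i)
  case 0 then show ?case using f by simp
next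
  case (Suc i)
  show ?case using fps_bnd_mult[OF Suc f] by auto
qed

lemma Tlemma:
  assumes H: "NilR_poly \<subseteq> (NilRx :: 'a::ring poly set)"
    and a: "(a::'a) \<in> NilR" and b: "b \<in> NilR" and aM: "mpow (*) a M = 0"
  shows "(\<Sum>i<M. mpow (*) a i * b) \<in> NilR"
proof -
  define S where "S = (\<Sum>i<M. mpow (*) a i * b)"
  define Y where "Y = b + S"
  have shift: "(\<Sum>i<M. mpow (*) a (Suc i) * b) = S - a * b + mpow (*) a M * b"
  proof -
    have "(\<Sum>i<Suc M. mpow (*) a i * b) = a * b + (\<Sum>i<M. mpow (*) a (Suc i) * b)"
      by (subst sum.lessThan_Suc_shift) simp
    moreover have "(\<Sum>i<Suc M. mpow (*) a i * b) = S + mpow (*) a M * b"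
      by (simp add: S_def)
    ultimately show ?thesis by (simp add: algebra_simps)
  qed
  have aS: "a * S = (\<Sum>i<M. mpow (*) a (Suc i) * b)"
    unfolding S_def by (simp add: sum_distrib_left mult.assoc[symmetric] mpow_left)
  have hY: "Y - a * Y = b"
    unfolding Y_def using shift aS aM by (simp add: algebra_simps)
  let ?p = "[:a, b:]"
  have "?p \<in> NilR_poly"
    unfolding NilR_poly_def using a b zero_Nil
    by (auto simp: coeff_pCons split: nat.splits)
  then have "?p \<in> NilRx" using H by blast
  then obtain n where n: "mpow pmult ?p n = 0" by (auto simp: Nil_of_def)
  define f where "f = phi ?p"
  have fN: "mpow (*) f n = 0" unfolding f_def using n by (metis phi_mpow phi_eq0)
  have fSn: "mpow (*) f (Suc n) = 0" using fN by simp
  define F where "F = (\<Sum>i\<le>n. mpow (*) f i)"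
  have hF: "F * f = F - f"
  proof -
    have "F * f = (\<Sum>i\<le>n. mpow (*) f (Suc i))" by (simp add: F_def sum_distrib_right)
    also have "\<dots> = (\<Sum>i\<le>Suc n. mpow (*) f i) - f"
      by (subst sum.atMost_Suc_shift) simp
    also have "\<dots> = F - f" using fSn by (simp add: F_def)
    finally show ?thesis .
  qed
  define A where "A = fps_const a"
  define B where "B = Abs_fps (\<lambda>k. if k = 1 then b else 0)"
  define Yx where "Yx = Abs_fps (\<lambda>k. if k = 1 then Y else 0)"
  have fAB: "f = A + B"
    by (rule fps_ext) (auto simp: f_def A_def B_def coeff_pCons split: nat.splits)
  have hYx: "Yx - A * Yx = B"
    by (rule fps_ext) (use hY in \<open>auto simp: A_def B_def Yx_def\<close>)
  define Z where "Z = F - A - F * A"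
  have "Z - Yx - Z * Yx = F - (A + (Yx - A * Yx)) - F * (A + (Yx - A * Yx))"
    by (simp add: Z_def algebra_simps)
  also have "\<dots> = 0" using hF by (simp add: hYx fAB)
  finally have hZ: "Z = Yx + Z * Yx" by (simp add: algebra_simps)
  have Z0: "Z $ 0 = 0"
    using arg_cong[OF hZ, of "\<lambda>g. g $ 0"] by (simp add: fps_mult_nth Yx_def)
  have ZS: "(Z * Yx) $ Suc k = Z $ k * Y" for k
  proof -
    have "(Z * Yx) $ Suc k = (\<Sum>i=0..Suc k. Z $ i * Yx $ (Suc k - i))" by (simp add: fps_mult_nth)
    also have "\<dots> = Z $ k * Yx $ (Suc k - k)"
      by (rule sum_single) (auto simp: Yx_def)
    finally show ?thesis by (simp add: Yx_def)
  qed
  have Zk: "Z $ Suc k = mpow (*) Y k" for k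
  proof (induction k)
    case 0
    show ?case using arg_cong[OF hZ, of "\<lambda>g. g $ 1"] ZS[of 0] Z0 by (simp add: Yx_def)
  next
    case (Suc k)
    show ?case using arg_cong[OF hZ, of "\<lambda>g. g $ Suc (Suc k)"] ZS[of "Suc k"] Suc
      by (simp add: Yx_def)
  qed
  have fb: "\<forall>k>1. f $ k = 0" by (auto simp: f_def coeff_eq_0)
  have Fb: "F $ k = 0" if "k > Suc n" for k
    unfolding F_def fps_sum_nth
    by (rule sum.neutral) (use fps_mpow_bnd[OF fb] that in auto)
  have "Z $ Suc (Suc n) = 0"
    by (simp add: Z_def Fb A_def)
  then have "mpow (*) Y (Suc n) = 0" using Zk by simp
  then have "Y \<in> NilR" unfolding Nil_of_def by blast
  from NilD[OF H this b] show ?thesis by (simp add: Y_def S_def)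
qed


lemma NilMult:
  assumes H: "NilR_poly \<subseteq> (NilRx :: 'a::ring poly set)"
    and a: "(a::'a) \<in> NilR" and b: "b \<in> NilR"
  shows "a * b \<in> NilR"
proof -
  obtain m where am: "mpow (*) a m = 0" using a by (auto simp: Nil_of_def)
  define M where "M = Suc m"
  have aM: "mpow (*) a M = 0" using mpow_zero_mono[OF am] by (simp add: M_def)
  have P: "mpow (*) a k * b \<in> NilR" for k
  proof (induction "M - k" arbitrary: k rule: less_induct)
    case less
    show ?case
    proof (cases "M \<le> k")
      case True
      then have "mpow (*) a k = 0" using mpow_zero_mono[OF aM] by blast
      then show ?thesis by (simp add: zero_Nil)
    next
      case False
      define c where "c = mpow (*) a k"
      have "mpow (*) c M = mpow (*) a (Suc k * Suc M - 1)" by (simp add: c_def mpow_mpow)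
      also have "\<dots> = 0" by (rule mpow_zero_mono[OF aM]) simp
      finally have cM: "mpow (*) c M = 0" .
      have cN: "c \<in> NilR" using cM by (auto simp: Nil_of_def)
      have T: "(\<Sum>i<M. mpow (*) c i * b) \<in> NilR" by (rule Tlemma[OF H cN b cM])
      have split: "(\<Sum>i<M. mpow (*) c i * b) = c * b + (\<Sum>i<m. mpow (*) c (Suc i) * b)"
        unfolding M_def by (subst sum.lessThan_Suc_shift) simp
      have rest: "(\<Sum>i<m. mpow (*) c (Suc i) * b) \<in> NilR"
      proof (rule NilSum[OF H], simp, goal_cases)
        case (1 i)
        have e: "mpow (*) c (Suc i) = mpow (*) a (Suc k * Suc (Suc i) - 1)"
          unfolding c_def by (rule mpow_mpow)
        have "M - (Suc k * Suc (Suc i) - 1) < M - k" using False by (simp add: algebra_simps)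
        then show ?case unfolding e by (rule less)
      qed
      have "(\<Sum>i<M. mpow (*) c i * b) - (\<Sum>i<m. mpow (*) c (Suc i) * b) \<in> NilR"
        by (rule NilD[OF H T rest])
      then have "c * b \<in> NilR" unfolding split by simp
      then show ?thesis by (simp add: c_def)
    qed
  qed
  show ?thesis using P[of 0] by simp
qed

theorem corollary2p14:
  shows "is_subring_poly (NilRx :: 'a::ring poly set) \<longleftrightarrow> NilR_poly = (NilRx :: 'a poly set)"
proof
  assume "is_subring_poly (NilRx :: 'a::ring poly set)"
  then show "NilR_poly = (NilRx :: 'a poly set)" by (rule fwd)
next
  assume E: "NilR_poly = (NilRx :: 'a poly set)"
  then have H: "NilR_poly \<subseteq> (NilRx :: 'a::ring poly set)" by simp
  show "is_subring_poly (NilRx :: 'a::ring poly set)"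
    unfolding is_subring_poly_def
  proof (intro conjI ballI pzero_Nil)
    fix p q :: "'a poly" assume p: "p \<in> NilRx" and q: "q \<in> NilRx"
    then have pc: "coeff p i \<in> NilR" and qc: "coeff q i \<in> NilR" for i
      using E by (auto simp: NilR_poly_def)
    have "p - q \<in> NilR_poly"
      unfolding NilR_poly_def by (auto intro: NilD[OF H pc qc])
    then show "p - q \<in> NilRx" using E by simp
    have "coeff (pmult p q) i \<in> NilR" for i
      unfolding coeff_pmult by (rule NilSum[OF H]) (auto intro: NilMult[OF H pc qc])
    then have "pmult p q \<in> NilR_poly"
      unfolding NilR_poly_def by simp
    then show "pmult p q \<in> NilRx" using E by simp
  qed
qed

end
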